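(* Let $\mathcal C$ be an operadic category. The unit $U$ of $\mathrm{Coll}_{\mathcal C}$ has a unique right $U$-module structure, and with it $U$ is the unit of $\mathrm{Coll}_{\mathcal C}^U$. For right $U$-modules (equivalently presheaves on $\mathbb C$) $X$ and $Y$, the tensor product $X\wedge Y$ is the quotient of $X*Y$ by the equivalence relation generated by $(x,\pi\varphi,y)\sim(x\pi,\varphi,y_\pi)$, where $\varphi:c\to d'$ is in $\mathcal C$, $\pi:d'\to d$ is in $\mathbb C$, $x\in X_d$, $y=(y_i)_{i\in|d|}$ with $y_i\in Y_{(\pi\varphi)^{-1}i}$, and $y_\pi$ is the $|d'|$-indexed family with $(y_\pi)_{i'}=y_{|\pi|(i')}$. Moreover, if $\sigma:c'\to c$ is in $\mathbb C$, then the $\mathbb C$-action on $X\wedge Y$ is given by $[x,\varphi,y]\sigma=[x,\varphi\sigma,y\sigma]$, where $\varphi:c\to d$, $x\in X_d$, $y=(y_i\in Y_{\varphi^{-1}i})_{i\in|d|}$, and $y\sigma$ is the $|d|$-indexed family with $(y\sigma)_i=y_i\sigma_i^\varphi$.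
   Context: Operadic categories: $\mathcal S$ is a skeleton of finite sets, with fixed equivalences $R_I:\mathcal S/I\to\mathcal S^I$ sending $f:J\to I$ to its fibres. An operadic category is a category $\mathcal C$ with a functor $|\cdot|:\mathcal C\to\mathcal S$ and functors $R_c:\mathcal C/c\to\mathcal C^{|c|}$ with $|\cdot|^{|c|}\circ R_c=R_{|c|}\circ(|\cdot|/c)$; the fibre $\psi^{-1}i$ of $\psi:c\to d$ at $i\in|d|$ is the $i$-th component of $R_d(\psi)$; for $\varphi:b\to c,\psi:c\to d$, $\varphi^\psi=R_d(\varphi:\psi\varphi\to\psi)$ with components $\varphi^\psi_j:(\psi\varphi)^{-1}j\to\psi^{-1}j$; $u$ is trivial if $|u|=1$ and $R_u=\mathrm{dom}$. Axioms: fibres of identities are trivial; double slice condition: for $\psi:c\to d$, $R_c\circ(\mathrm{dom}/\psi)=(\cong)\circ(\prod_jR_{\psi^{-1}j})\circ(R_d/\psi)$ as functors $(\mathcal C/d)/\psi\to\mathcal C^{|c|}$, via $\mathcal C^{|d|}/R_d\psi\cong\prod_j\mathcal C/\psi^{-1}j$ and $|c|\cong\sum_j|\psi|^{-1}j$. A morphism is fibrewise trivial if all its fibres are trivial; these form a wide subcategory $\mathbb C$ of $\mathcal C$. $\mathrm{Coll}_{\mathcal C}$ is the skew monoidal category with underlying category $\mathbf{Set}/C$ ($C$ = object set; objects $\partial:X\to C$, $X_c=\partial^{-1}c$), tensor $(X*Y)_c=\sum_{\varphi:c\to d}X_d\times\prod_{i\in|d|}Y_{\varphi^{-1}i}$ (elements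 $(x,\varphi,y)$), unit $U$ the set of trivial objects, maps $\alpha(x,\psi,y,\varphi,z)=(x,\psi\varphi,y,\varphi^\psi,z)$, $\lambda(u,\varphi,x)=x$, $\rho(x)=(x,1_{\partial x},(1_{\partial x}^{-1}i)_i)$. A right $U$-module is $X$ with $r:X*U\to X$ such that $r(r*1)=r(1*\lambda)\alpha$ and $r\rho=1$. An element of $(X*U)_c$ amounts to a morphism $\pi:c\to d$ in $\mathbb C$ and $x\in X_d$; thus a right $U$-module is the same as a presheaf on $\mathbb C$, writing $x\pi\in X_c$ for the action. $\mathrm{Coll}_{\mathcal C}^U$ is the category of right $U$-modules with the following skew monoidal structure: $X\wedge Y$ is the coequalizer $p:X*Y\to X\wedge Y$ of the two maps $r_X*1$ and $(1*\lambda)\circ\alpha$ from $(X*U)*Y$ to $X*Y$, with action $r:(X\wedge Y)*U\to X\wedge Y$ determined by $r\circ(p*1)=p\circ(1*r_Y)\circ\alpha$; the unit is $U$; the structure maps are induced from those of $\mathrm{Coll}_{\mathcal C}$ via the quotient maps. $[x,\varphi,y]$ denotes the class of $(x,\varphi,y)$. *)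

theory Defs
  imports Main "HOL-Library.FuncSet"
begin

text \<open>The skeleton S of finite sets: objects are natural numbers n (standing for
{0..<n}); a morphism m -> n is a function nat => nat, considered on {..<m}.
The fixed equivalence R_I sends f : m -> n to its fibres, each fibre
{k<m. f k = i} being identified with {0..<card} in increasing order.\<close>

definition sfib :: "(nat \<Rightarrow> nat) \<Rightarrow> nat \<Rightarrow> nat \<Rightarrow> nat set" where
  "sfib f m i = {k. k < m \<and> f k = i}"

definition spos :: "nat \<Rightarrow> nat set \<Rightarrow> nat" where
  "spos a A = card {b \<in> A. b < a}"

definition senum :: "nat set \<Rightarrow> nat \<Rightarrow> nat" where
  "senum A l = sorted_list_of_set A ! l"

text \<open>Data of a category C equipped with a cardinality functor to S and fibre
functors: cFib C psi i is the fibre psi^{-1} i, and cFibm C phi psi j is phi^psi_j.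
cComp C g f is the composite g o f.\<close>

record ('o, 'm) opcat =
  cOb :: "'o set"
  cMor :: "'m set"
  cDom :: "'m \<Rightarrow> 'o"
  cCod :: "'m \<Rightarrow> 'o"
  cComp :: "'m \<Rightarrow> 'm \<Rightarrow> 'm"
  cId :: "'o \<Rightarrow> 'm"
  cCard :: "'o \<Rightarrow> nat"
  cCardm :: "'m \<Rightarrow> nat \<Rightarrow> nat"
  cFib :: "'m \<Rightarrow> nat \<Rightarrow> 'o"
  cFibm :: "'m \<Rightarrow> 'm \<Rightarrow> nat \<Rightarrow> 'm"

definition is_category :: "('o, 'm) opcat \<Rightarrow> bool" where
  "is_category C \<longleftrightarrow>
    (\<forall>f \<in> cMor C. cDom C f \<in> cOb C \<and> cCod C f \<in> cOb C) \<and>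
    (\<forall>c \<in> cOb C. cId C c \<in> cMor C \<and> cDom C (cId C c) = c \<and> cCod C (cId C c) = c) \<and>
    (\<forall>f \<in> cMor C. \<forall>g \<in> cMor C. cCod C f = cDom C g \<longrightarrow>
        cComp C g f \<in> cMor C \<and> cDom C (cComp C g f) = cDom C f \<and> cCod C (cComp C g f) = cCod C g) \<and>
    (\<forall>f \<in> cMor C. cComp C (cId C (cCod C f)) f = f \<and> cComp C f (cId C (cDom C f)) = f) \<and>
    (\<forall>f \<in> cMor C. \<forall>g \<in> cMor C. \<forall>h \<in> cMor C. cCod C f = cDom C g \<and> cCod C g = cDom C h \<longrightarrow>
        cComp C h (cComp C g f) = cComp C (cComp C h g) f)"

definition card_functor :: "('o, 'm) opcat \<Rightarrow> bool" where
  "card_functor C \<longleftrightarrow>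
    (\<forall>f \<in> cMor C. \<forall>i < cCard C (cDom C f). cCardm C f i < cCard C (cCod C f)) \<and>
    (\<forall>c \<in> cOb C. \<forall>i < cCard C c. cCardm C (cId C c) i = i) \<and>
    (\<forall>f \<in> cMor C. \<forall>g \<in> cMor C. cCod C f = cDom C g \<longrightarrow>
        (\<forall>i < cCard C (cDom C f). cCardm C (cComp C g f) i = cCardm C g (cCardm C f i)))"

text \<open>R_d : C/d -> C^{|d|} is a functor, and |.|^{|c|} o R_c = R_{|c|} o (|.|/c)\<close>
definition fibre_functors :: "('o, 'm) opcat \<Rightarrow> bool" where
  "fibre_functors C \<longleftrightarrow>
    (\<forall>psi \<in> cMor C. \<forall>i < cCard C (cCod C psi). cFib C psi i \<in> cOb C) \<and>
    (\<forall>phi \<in> cMor C. \<forall>psi \<in> cMor C. cCod C phi = cDom C psi \<longrightarrow>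
       (\<forall>i < cCard C (cCod C psi).
          cFibm C phi psi i \<in> cMor C \<and>
          cDom C (cFibm C phi psi i) = cFib C (cComp C psi phi) i \<and>
          cCod C (cFibm C phi psi i) = cFib C psi i)) \<and>
    (\<forall>psi \<in> cMor C. \<forall>i < cCard C (cCod C psi).
        cFibm C (cId C (cDom C psi)) psi i = cId C (cFib C psi i)) \<and>
    (\<forall>chi \<in> cMor C. \<forall>phi \<in> cMor C. \<forall>psi \<in> cMor C.
        cCod C chi = cDom C phi \<and> cCod C phi = cDom C psi \<longrightarrow>
       (\<forall>i < cCard C (cCod C psi).
          cFibm C (cComp C phi chi) psi i
            = cComp C (cFibm C phi psi i) (cFibm C chi (cComp C psi phi) i))) \<and>
    (\<forall>psi \<in> cMor C. \<forall>i < cCard C (cCod C psi).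
        cCard C (cFib C psi i) = card (sfib (cCardm C psi) (cCard C (cDom C psi)) i)) \<and>
    (\<forall>phi \<in> cMor C. \<forall>psi \<in> cMor C. cCod C phi = cDom C psi \<longrightarrow>
       (\<forall>i < cCard C (cCod C psi). \<forall>l < cCard C (cFib C (cComp C psi phi) i).
          cCardm C (cFibm C phi psi i) l
            = spos (cCardm C phi (senum (sfib (cCardm C (cComp C psi phi)) (cCard C (cDom C phi)) i) l))
                   (sfib (cCardm C psi) (cCard C (cDom C psi)) i)))"

definition triv :: "('o, 'm) opcat \<Rightarrow> 'o \<Rightarrow> bool" where
  "triv C u \<longleftrightarrow> u \<in> cOb C \<and> cCard C u = 1 \<and>
    (\<forall>psi \<in> cMor C. cCod C psi = u \<longrightarrow> cFib C psi 0 = cDom C psi) \<and>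
    (\<forall>phi \<in> cMor C. \<forall>psi \<in> cMor C. cCod C phi = cDom C psi \<and> cCod C psi = u \<longrightarrow>
        cFibm C phi psi 0 = phi)"

definition operadic :: "('o, 'm) opcat \<Rightarrow> bool" where
  "operadic C \<longleftrightarrow> is_category C \<and> card_functor C \<and> fibre_functors C \<and>
    \<comment> \<open>fibres of identities are trivial\<close>
    (\<forall>c \<in> cOb C. \<forall>i < cCard C c. triv C (cFib C (cId C c) i)) \<and>
    \<comment> \<open>double slice condition, via |c| = Sum_j |psi|^{-1} j, k <-> (|psi| k, position of k)\<close>
    (\<forall>phi \<in> cMor C. \<forall>psi \<in> cMor C. cCod C phi = cDom C psi \<longrightarrow>
      (\<forall>k < cCard C (cDom C psi).
        let j = cCardm C psi k;
            l = spos k (sfib (cCardm C psi) (cCard C (cDom C psi)) j)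
        in cFib C phi k = cFib C (cFibm C phi psi j) l \<and>
           (\<forall>chi \<in> cMor C. cCod C chi = cDom C phi \<longrightarrow>
              cFibm C chi phi k = cFibm C (cFibm C chi (cComp C psi phi) j) (cFibm C phi psi j) l)))"

text \<open>fibrewise trivial morphisms (the wide subcategory \<bbbC>)\<close>
definition fwt :: "('o, 'm) opcat \<Rightarrow> 'm \<Rightarrow> bool" where
  "fwt C f \<longleftrightarrow> f \<in> cMor C \<and> (\<forall>i < cCard C (cCod C f). triv C (cFib C f i))"

section \<open>Collections: objects of Set/C are pairs (X, dX) with dX : X -> Ob C\<close>

definition tens :: "('o, 'm) opcat \<Rightarrow> 'a set \<Rightarrow> ('a \<Rightarrow> 'o) \<Rightarrow> 'b set \<Rightarrow> ('b \<Rightarrow> 'o)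
    \<Rightarrow> ('a \<times> 'm \<times> (nat \<Rightarrow> 'b)) set" where
  "tens C X dX Y dY = {(x, phi, y). phi \<in> cMor C \<and> x \<in> X \<and> dX x = cCod C phi \<and>
      y \<in> (\<Pi>\<^sub>E i \<in> {..<cCard C (cCod C phi)}. {v \<in> Y. dY v = cFib C phi i})}"

definition tdom :: "('o, 'm) opcat \<Rightarrow> ('a \<times> 'm \<times> 'c) \<Rightarrow> 'o" where
  "tdom C a = cDom C (fst (snd a))"

definition Uset :: "('o, 'm) opcat \<Rightarrow> 'o set" where
  "Uset C = {u \<in> cOb C. triv C u}"

definition assoc :: "('o, 'm) opcat \<Rightarrow> (('a \<times> 'm \<times> (nat \<Rightarrow> 'b)) \<times> 'm \<times> (nat \<Rightarrow> 'c))
    \<Rightarrow> ('a \<times> 'm \<times> (nat \<Rightarrow> ('b \<times> 'm \<times> (nat \<Rightarrow> 'c))))" where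
  "assoc C a = (case a of ((x, psi, y), phi, z) \<Rightarrow>
     (x, cComp C psi phi,
      restrict (\<lambda>j. (y j, cFibm C phi psi j,
          restrict (\<lambda>l. z (senum (sfib (cCardm C psi) (cCard C (cDom C psi)) j) l))
                   {..<cCard C (cFib C psi j)}))
        {..<cCard C (cCod C psi)}))"

text \<open>f * 1 and 1 * g\<close>
definition lft :: "('a \<Rightarrow> 'b) \<Rightarrow> ('a \<times> 'm \<times> 'c) \<Rightarrow> ('b \<times> 'm \<times> 'c)" where
  "lft f a = (case a of (w, phi, y) \<Rightarrow> (f w, phi, y))"

definition rgt :: "('o, 'm) opcat \<Rightarrow> ('b \<Rightarrow> 'c) \<Rightarrow> ('a \<times> 'm \<times> (nat \<Rightarrow> 'b))
    \<Rightarrow> ('a \<times> 'm \<times> (nat \<Rightarrow> 'c))" where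
  "rgt C g a = (case a of (x, phi, w) \<Rightarrow> (x, phi, restrict (\<lambda>i. g (w i)) {..<cCard C (cCod C phi)}))"

definition lam :: "('o \<times> 'm \<times> (nat \<Rightarrow> 'b)) \<Rightarrow> 'b" where
  "lam a = snd (snd a) 0"

definition rho :: "('o, 'm) opcat \<Rightarrow> ('a \<Rightarrow> 'o) \<Rightarrow> 'a \<Rightarrow> ('a \<times> 'm \<times> (nat \<Rightarrow> 'o))" where
  "rho C d x = (x, cId C (d x), restrict (\<lambda>i. cFib C (cId C (d x)) i) {..<cCard C (d x)})"

definition rmod :: "('o, 'm) opcat \<Rightarrow> 'a set \<Rightarrow> ('a \<Rightarrow> 'o) \<Rightarrow> (('a \<times> 'm \<times> (nat \<Rightarrow> 'o)) \<Rightarrow> 'a) \<Rightarrow> bool" where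
  "rmod C X d r \<longleftrightarrow>
    (\<forall>x \<in> X. d x \<in> cOb C) \<and>
    (\<forall>a \<in> tens C X d (Uset C) id. r a \<in> X \<and> d (r a) = tdom C a) \<and>
    (\<forall>b \<in> tens C (tens C X d (Uset C) id) (tdom C) (Uset C) id.
        r (lft r b) = r (rgt C lam (assoc C b))) \<and>
    (\<forall>x \<in> X. r (rho C d x) = x)"

definition fibfam :: "('o, 'm) opcat \<Rightarrow> 'm \<Rightarrow> nat \<Rightarrow> 'o" where
  "fibfam C p = restrict (\<lambda>i. cFib C p i) {..<cCard C (cCod C p)}"

definition genEq :: "'a set \<Rightarrow> ('a \<times> 'a) set \<Rightarrow> ('a \<times> 'a) set" where
  "genEq A R = Id_on A \<union> (R \<union> R\<inverse>)\<^sup>+"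

text \<open>the pairs identified by the coequalizer of r_X * 1 and (1 * lambda) o alpha\<close>
definition coeq_pairs :: "('o, 'm) opcat \<Rightarrow> 'x set \<Rightarrow> ('x \<Rightarrow> 'o) \<Rightarrow> (('x \<times> 'm \<times> (nat \<Rightarrow> 'o)) \<Rightarrow> 'x)
    \<Rightarrow> 'y set \<Rightarrow> ('y \<Rightarrow> 'o) \<Rightarrow> (('x \<times> 'm \<times> (nat \<Rightarrow> 'y)) \<times> ('x \<times> 'm \<times> (nat \<Rightarrow> 'y))) set" where
  "coeq_pairs C X dX rX Y dY =
     {(lft rX b, rgt C lam (assoc C b)) | b. b \<in> tens C (tens C X dX (Uset C) id) (tdom C) Y dY}"

text \<open>the kernel of the quotient map p : X * Y -> X wedge Y (coequalizer in Set/C)\<close>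
definition wedge_rel :: "('o, 'm) opcat \<Rightarrow> 'x set \<Rightarrow> ('x \<Rightarrow> 'o) \<Rightarrow> (('x \<times> 'm \<times> (nat \<Rightarrow> 'o)) \<Rightarrow> 'x)
    \<Rightarrow> 'y set \<Rightarrow> ('y \<Rightarrow> 'o) \<Rightarrow> (('x \<times> 'm \<times> (nat \<Rightarrow> 'y)) \<times> ('x \<times> 'm \<times> (nat \<Rightarrow> 'y))) set" where
  "wedge_rel C X dX rX Y dY = genEq (tens C X dX Y dY) (coeq_pairs C X dX rX Y dY)"

text \<open>the quotient map p, [x, phi, y] = p (x, phi, y)\<close>
definition wcls :: "('o, 'm) opcat \<Rightarrow> 'x set \<Rightarrow> ('x \<Rightarrow> 'o) \<Rightarrow> (('x \<times> 'm \<times> (nat \<Rightarrow> 'o)) \<Rightarrow> 'x)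
    \<Rightarrow> 'y set \<Rightarrow> ('y \<Rightarrow> 'o) \<Rightarrow> ('x \<times> 'm \<times> (nat \<Rightarrow> 'y)) \<Rightarrow> ('x \<times> 'm \<times> (nat \<Rightarrow> 'y)) set" where
  "wcls C X dX rX Y dY a = wedge_rel C X dX rX Y dY `` {a}"

text \<open>the explicit generating relation (x, pi phi, y) ~ (x pi, phi, y_pi)\<close>
definition expl_pairs :: "('o, 'm) opcat \<Rightarrow> 'x set \<Rightarrow> ('x \<Rightarrow> 'o) \<Rightarrow> (('x \<times> 'm \<times> (nat \<Rightarrow> 'o)) \<Rightarrow> 'x)
    \<Rightarrow> 'y set \<Rightarrow> ('y \<Rightarrow> 'o) \<Rightarrow> (('x \<times> 'm \<times> (nat \<Rightarrow> 'y)) \<times> ('x \<times> 'm \<times> (nat \<Rightarrow> 'y))) set" where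
  "expl_pairs C X dX rX Y dY =
     {((x, cComp C p phi, y),
       (rX (x, p, fibfam C p), phi, restrict (\<lambda>i'. y (cCardm C p i')) {..<cCard C (cDom C p)}))
      | x p phi y. phi \<in> cMor C \<and> fwt C p \<and> cCod C phi = cDom C p \<and> x \<in> X \<and> dX x = cCod C p \<and>
          y \<in> (\<Pi>\<^sub>E i \<in> {..<cCard C (cCod C p)}. {v \<in> Y. dY v = cFib C (cComp C p phi) i})}"

end

theory Submission
  imports Defs
begin
lemma senum_spos:
  assumes "finite A" "l < card A"
  shows "senum A l \<in> A \<and> spos (senum A l) A = l"
proof -
  define xs where "xs = sorted_list_of_set A"
  have len: "length xs = card A" unfolding xs_def by simp
  have st: "sorted_wrt (<) xs" unfolding xs_def by (rule strict_sorted_list_of_set)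
  have sA: "set xs = A" unfolding xs_def using assms by simp
  have dist: "distinct xs" unfolding xs_def by simp
  have mem: "xs ! l \<in> A" using sA len assms nth_mem by metis
  have eq: "{b \<in> A. b < xs ! l} = (\<lambda>i. xs ! i) ` {..<l}"
  proof
    show "{b \<in> A. b < xs ! l} \<subseteq> (\<lambda>i. xs ! i) ` {..<l}"
    proof
      fix b assume b: "b \<in> {b \<in> A. b < xs ! l}"
      then obtain i where i: "i < length xs" "b = xs ! i" using sA by (auto simp: in_set_conv_nth)
      have "i < l"
      proof (rule ccontr)
        assume "\<not> i < l"
        then have "l \<le> i" by simp
        then have "xs ! l \<le> xs ! i" using st i assms len
          by (metis le_eq_less_or_eq order.strict_implies_order sorted_wrt_nth_less)
        then show False using b i by simp
      qed
      then show "b \<in> (\<lambda>i. xs ! i) ` {..<l}" using i by auto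
    qed
  next
    show "(\<lambda>i. xs ! i) ` {..<l} \<subseteq> {b \<in> A. b < xs ! l}"
      using st assms len sA by (auto intro: sorted_wrt_nth_less)
  qed
  have inj: "inj_on (\<lambda>i. xs ! i) {..<l}" using dist assms len
    by (auto simp: inj_on_def nth_eq_iff_index_eq)
  have "card {b \<in> A. b < xs ! l} = l" using eq card_image[OF inj] by simp
  then show ?thesis using mem unfolding senum_def spos_def xs_def by simp
qed

lemma sfib_finite: "finite (sfib f m i)"
  unfolding sfib_def by simp

lemma singleton_senum: "A = {k} \<Longrightarrow> senum A 0 = k"
  unfolding senum_def by simp

lemma singleton_spos: "A = {k} \<Longrightarrow> spos k A = 0"
  unfolding spos_def by simp

locale opc =
  fixes C :: "('o, 'm) opcat"
  assumes op: "operadic C"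
begin

abbreviation "M \<equiv> cMor C"
abbreviation "dm \<equiv> cDom C"
abbreviation "cd \<equiv> cCod C"
abbreviation "cp \<equiv> cComp C"
abbreviation "crd \<equiv> cCard C"
abbreviation "crdm \<equiv> cCardm C"
abbreviation "fib \<equiv> cFib C"
abbreviation "fibm \<equiv> cFibm C"

lemma cat: "is_category C" and cf: "card_functor C" and ff: "fibre_functors C"
  using op unfolding operadic_def by auto

lemma dom_ob: "f \<in> M \<Longrightarrow> dm f \<in> cOb C" and cod_ob: "f \<in> M \<Longrightarrow> cd f \<in> cOb C"
  using cat unfolding is_category_def by auto

lemma id_mor: "c \<in> cOb C \<Longrightarrow> cId C c \<in> M \<and> dm (cId C c) = c \<and> cd (cId C c) = c"
  using cat unfolding is_category_def by auto

lemma comp_mor: "f \<in> M \<Longrightarrow> g \<in> M \<Longrightarrow> cd f = dm g \<Longrightarrow> cp g f \<in> M"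
  and comp_dom: "f \<in> M \<Longrightarrow> g \<in> M \<Longrightarrow> cd f = dm g \<Longrightarrow> dm (cp g f) = dm f"
  and comp_cod: "f \<in> M \<Longrightarrow> g \<in> M \<Longrightarrow> cd f = dm g \<Longrightarrow> cd (cp g f) = cd g"
  using cat unfolding is_category_def by auto

lemma comp_assoc: "f \<in> M \<Longrightarrow> g \<in> M \<Longrightarrow> h \<in> M \<Longrightarrow> cd f = dm g \<Longrightarrow> cd g = dm h \<Longrightarrow>
   cp h (cp g f) = cp (cp h g) f"
  using cat unfolding is_category_def by auto

lemma crdm_lt: "f \<in> M \<Longrightarrow> i < crd (dm f) \<Longrightarrow> crdm f i < crd (cd f)"
  using cf unfolding card_functor_def by auto

lemma fib_ob: "psi \<in> M \<Longrightarrow> i < crd (cd psi) \<Longrightarrow> fib psi i \<in> cOb C"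
  using ff unfolding fibre_functors_def by auto

lemma fibm_mor: "phi \<in> M \<Longrightarrow> psi \<in> M \<Longrightarrow> cd phi = dm psi \<Longrightarrow> i < crd (cd psi) \<Longrightarrow>
   fibm phi psi i \<in> M \<and> dm (fibm phi psi i) = fib (cp psi phi) i \<and> cd (fibm phi psi i) = fib psi i"
  using ff unfolding fibre_functors_def by blast

lemma crd_fib: "psi \<in> M \<Longrightarrow> i < crd (cd psi) \<Longrightarrow> crd (fib psi i) = card (sfib (crdm psi) (crd (dm psi)) i)"
  using ff unfolding fibre_functors_def by blast

lemma dslice: "phi \<in> M \<Longrightarrow> psi \<in> M \<Longrightarrow> cd phi = dm psi \<Longrightarrow> k < crd (dm psi) \<Longrightarrow>
   fib phi k = fib (fibm phi psi (crdm psi k)) (spos k (sfib (crdm psi) (crd (dm psi)) (crdm psi k)))"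
  using op unfolding operadic_def Let_def by blast

lemma dslice2: "phi \<in> M \<Longrightarrow> psi \<in> M \<Longrightarrow> cd phi = dm psi \<Longrightarrow> k < crd (dm psi) \<Longrightarrow>
   chi \<in> M \<Longrightarrow> cd chi = dm phi \<Longrightarrow>
   fibm chi phi k = fibm (fibm chi (cp psi phi) (crdm psi k)) (fibm phi psi (crdm psi k))
      (spos k (sfib (crdm psi) (crd (dm psi)) (crdm psi k)))"
  using op unfolding operadic_def Let_def by blast

lemma triv_card: "triv C u \<Longrightarrow> crd u = 1" and triv_ob: "triv C u \<Longrightarrow> u \<in> cOb C"
  unfolding triv_def by auto

lemma triv_fib: "triv C u \<Longrightarrow> psi \<in> M \<Longrightarrow> cd psi = u \<Longrightarrow> fib psi 0 = dm psi"
  unfolding triv_def by auto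

lemma triv_fibm: "triv C u \<Longrightarrow> phi \<in> M \<Longrightarrow> psi \<in> M \<Longrightarrow> cd phi = dm psi \<Longrightarrow> cd psi = u \<Longrightarrow>
   fibm phi psi 0 = phi"
  unfolding triv_def by auto

lemma fwt_sfib:
  assumes "fwt C p" "j < crd (cd p)"
  shows "\<exists>k. sfib (crdm p) (crd (dm p)) j = {k}"
proof -
  have "triv C (fib p j)" using assms unfolding fwt_def by auto
  then have "crd (fib p j) = 1" by (rule triv_card)
  then have "card (sfib (crdm p) (crd (dm p)) j) = 1" using crd_fib assms unfolding fwt_def by auto
  then show ?thesis by (simp add: card_1_singleton_iff)
qed

lemma fwt_spos:
  assumes "fwt C p" "k < crd (dm p)"
  shows "spos k (sfib (crdm p) (crd (dm p)) (crdm p k)) = 0"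
proof -
  have pm: "p \<in> M" using assms unfolding fwt_def by auto
  have lt: "crdm p k < crd (cd p)" using crdm_lt pm assms by auto
  obtain k' where k': "sfib (crdm p) (crd (dm p)) (crdm p k) = {k'}" using fwt_sfib[OF assms(1) lt] by auto
  have "k \<in> sfib (crdm p) (crd (dm p)) (crdm p k)" using assms unfolding sfib_def by auto
  then have "k = k'" using k' by auto
  then show ?thesis using k' singleton_spos by metis
qed

lemma fwt_senum:
  assumes "fwt C p" "j < crd (cd p)"
  shows "senum (sfib (crdm p) (crd (dm p)) j) 0 < crd (dm p) \<and>
         crdm p (senum (sfib (crdm p) (crd (dm p)) j) 0) = j"
proof -
  obtain k where k: "sfib (crdm p) (crd (dm p)) j = {k}" using fwt_sfib[OF assms] by auto
  have "k \<in> sfib (crdm p) (crd (dm p)) j" using k by auto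
  then show ?thesis using k singleton_senum unfolding sfib_def by (metis (mono_tags, lifting) mem_Collect_eq)
qed

lemma fwt_senum_crdm:
  assumes "fwt C p" "k < crd (dm p)"
  shows "senum (sfib (crdm p) (crd (dm p)) (crdm p k)) 0 = k"
proof -
  have pm: "p \<in> M" using assms unfolding fwt_def by auto
  have lt: "crdm p k < crd (cd p)" using crdm_lt pm assms by auto
  obtain k' where k': "sfib (crdm p) (crd (dm p)) (crdm p k) = {k'}" using fwt_sfib[OF assms(1) lt] by auto
  have "k \<in> sfib (crdm p) (crd (dm p)) (crdm p k)" using assms unfolding sfib_def by auto
  then show ?thesis using k' singleton_senum by auto
qed

lemma fwt_fibm:
  assumes s: "fwt C s" and phi: "phi \<in> M" and c: "cd s = dm phi" and j: "j < crd (cd phi)"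
  shows "fwt C (fibm s phi j)"
proof -
  have sm: "s \<in> M" using s unfolding fwt_def by auto
  have fm: "fibm s phi j \<in> M" "cd (fibm s phi j) = fib phi j" using fibm_mor[OF sm phi c j] by auto
  { fix l assume l: "l < crd (cd (fibm s phi j))"
    define A where "A = sfib (crdm phi) (crd (dm phi)) j"
    have "l < card A" using l fm crd_fib[OF phi j] A_def by simp
    then have kA: "senum A l \<in> A" and sp: "spos (senum A l) A = l"
      using senum_spos[OF sfib_finite] A_def by auto
    define k where "k = senum A l"
    have k1: "k < crd (dm phi)" and k2: "crdm phi k = j" using kA unfolding k_def A_def sfib_def by auto
    have "fib s k = fib (fibm s phi j) l" using dslice[OF sm phi c k1] k2 sp k_def A_def by simp
    moreover have "triv C (fib s k)" using s k1 c unfolding fwt_def by auto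
    ultimately have "triv C (fib (fibm s phi j) l)" by simp }
  then show ?thesis using fm unfolding fwt_def by auto
qed

end

lemma mem_tens: "(x,phi,y) \<in> tens C X d Y e \<longleftrightarrow> phi \<in> cMor C \<and> x \<in> X \<and> d x = cCod C phi \<and>
   y \<in> (\<Pi>\<^sub>E i \<in> {..<cCard C (cCod C phi)}. {v \<in> Y. e v = cFib C phi i})"
  by (simp add: tens_def)

lemma tensE:
  assumes "a \<in> tens C X d Y e"
  obtains x phi y where "a = (x,phi,y)" "phi \<in> cMor C" "x \<in> X" "d x = cCod C phi"
    "y \<in> (\<Pi>\<^sub>E i \<in> {..<cCard C (cCod C phi)}. {v \<in> Y. e v = cFib C phi i})"
  using assms by (cases a) (auto simp: tens_def)

context opc begin

lemma Uset_iff: "u \<in> Uset C \<longleftrightarrow> triv C u"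
  unfolding Uset_def using triv_ob by auto

lemma lam_UU:
  assumes "a \<in> tens C (Uset C) id (Uset C) id"
  shows "lam a = tdom C a \<and> lam a \<in> Uset C"
proof -
  obtain u phi y where a: "a = (u,phi,y)" "phi \<in> M" "u \<in> Uset C" "id u = cd phi"
    "y \<in> (\<Pi>\<^sub>E i \<in> {..<crd (cd phi)}. {v \<in> Uset C. id v = fib phi i})"
    by (rule tensE[OF assms])
  have tu: "triv C u" using a Uset_iff by auto
  have "crd (cd phi) = 1" using tu a triv_card by auto
  then have "y 0 \<in> Uset C" "y 0 = fib phi 0" using a(5) by auto
  moreover have "fib phi 0 = dm phi" using triv_fib[OF tu a(2)] a by auto
  ultimately show ?thesis using a unfolding lam_def tdom_def by auto
qed

lemma U_rmod: "rmod C (Uset C) id lam"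
proof -
  have 1: "\<forall>x \<in> Uset C. id x \<in> cOb C" unfolding Uset_def by auto
  have 2: "\<forall>a \<in> tens C (Uset C) id (Uset C) id. lam a \<in> Uset C \<and> id (lam a) = tdom C a"
  proof
    fix a assume "a \<in> tens C (Uset C) id (Uset C) id"
    from lam_UU[OF this] show "lam a \<in> Uset C \<and> id (lam a) = tdom C a" by (metis id_apply)
  qed
  have 3: "lam (lft lam b) = lam (rgt C lam (assoc C b))"
    if b: "b \<in> tens C (tens C (Uset C) id (Uset C) id) (tdom C) (Uset C) id" for b
  proof -
    obtain w phi z where bw: "b = (w,phi,z)" "phi \<in> M" "w \<in> tens C (Uset C) id (Uset C) id"
      "tdom C w = cd phi" "z \<in> (\<Pi>\<^sub>E i \<in> {..<crd (cd phi)}. {v \<in> Uset C. id v = fib phi i})"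
      by (rule tensE[OF b])
    obtain u psi y where w: "w = (u,psi,y)" "psi \<in> M" "u \<in> Uset C" "id u = cd psi"
      "y \<in> (\<Pi>\<^sub>E i \<in> {..<crd (cd psi)}. {v \<in> Uset C. id v = fib psi i})"
      by (rule tensE[OF bw(3)])
    have tu: "triv C u" using w Uset_iff by auto
    have c1: "crd (cd psi) = 1" using tu w triv_card by auto
    have y0: "y 0 \<in> Uset C" "y 0 = fib psi 0" using w(5) c1 by auto
    have "fib psi 0 = dm psi" using triv_fib[OF tu w(2)] w by auto
    then have t2: "triv C (dm psi)" using y0 Uset_iff by auto
    have cphi: "cd phi = dm psi" using bw w unfolding tdom_def by auto
    have c2: "crd (dm psi) = 1" using t2 triv_card by auto
    have cm: "crdm psi 0 = 0" using crdm_lt[OF w(2)] c1 c2 by auto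
    have sf: "sfib (crdm psi) (crd (dm psi)) 0 = {0}" using c2 cm unfolding sfib_def by auto
    have cf0: "crd (fib psi 0) = 1" using \<open>fib psi 0 = dm psi\<close> c2 by simp
    have L: "lam (lft lam b) = z 0" unfolding bw(1) w(1) lft_def lam_def by simp
    have R: "lam (rgt C lam (assoc C b)) = z (senum (sfib (crdm psi) (crd (dm psi)) 0) 0)"
      using c1 cf0 comp_cod[OF bw(2) w(2) cphi] unfolding bw(1) w(1) lft_def lam_def rgt_def assoc_def by simp
    show ?thesis using L R singleton_senum[OF sf] by simp
  qed
  have 4: "\<forall>x \<in> Uset C. lam (rho C id x) = x"
  proof
    fix x assume x: "x \<in> Uset C"
    then have tx: "triv C x" using Uset_iff by auto
    have im: "cId C x \<in> M \<and> dm (cId C x) = x \<and> cd (cId C x) = x" using id_mor triv_ob[OF tx] by blast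
    then have "fib (cId C x) 0 = x" using triv_fib[OF tx] by auto
    then show "lam (rho C id x) = x" using triv_card[OF tx] unfolding lam_def rho_def by simp
  qed
  show ?thesis unfolding rmod_def using 1 2 3 4 by blast
qed

lemma U_unique:
  assumes "rmod C (Uset C) id r" "a \<in> tens C (Uset C) id (Uset C) id"
  shows "r a = lam a"
  using assms lam_UU unfolding rmod_def by auto

end

context opc begin

abbreviation "SF p j \<equiv> sfib (crdm p) (crd (dm p)) j"

lemma fwt_mor: "fwt C p \<Longrightarrow> p \<in> M" unfolding fwt_def by auto

lemma fibk:
  assumes p: "fwt C p" and phi: "phi \<in> M" and c: "cd phi = dm p" and k: "k < crd (dm p)"
  shows "fib phi k = fib (cp p phi) (crdm p k)"
proof -
  have pm: "p \<in> M" using p fwt_mor by auto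
  have j: "crdm p k < crd (cd p)" using crdm_lt[OF pm k] .
  have t: "triv C (fib p (crdm p k))" using p j unfolding fwt_def by auto
  have fm: "fibm phi p (crdm p k) \<in> M" "dm (fibm phi p (crdm p k)) = fib (cp p phi) (crdm p k)"
     "cd (fibm phi p (crdm p k)) = fib p (crdm p k)" using fibm_mor[OF phi pm c j] by auto
  have "fib phi k = fib (fibm phi p (crdm p k)) 0" using dslice[OF phi pm c k] fwt_spos[OF p k] by simp
  also have "\<dots> = fib (cp p phi) (crdm p k)" using triv_fib[OF t fm(1) fm(3)] fm(2) by simp
  finally show ?thesis .
qed

lemma fibfam_mem: "fwt C p \<Longrightarrow> fibfam C p \<in> (\<Pi>\<^sub>E i \<in> {..<crd (cd p)}. {v \<in> Uset C. id v = fib p i})"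
  unfolding fibfam_def fwt_def using Uset_iff by auto

lemma assoc_lam:
  assumes p: "fwt C p" and phi: "phi \<in> M" and c: "cd phi = dm p"
  shows "rgt C lam (assoc C ((x,p,fibfam C p), phi, z)) =
         (x, cp p phi, restrict (\<lambda>j. z (senum (SF p j) 0)) {..<crd (cd p)})"
proof -
  have pm: "p \<in> M" using p fwt_mor by auto
  have cc: "cd (cp p phi) = cd p" using comp_cod[OF phi pm c] .
  have c1: "\<And>j. j < crd (cd p) \<Longrightarrow> crd (fib p j) = 1"
    using p triv_card unfolding fwt_def by auto
  have A: "assoc C ((x,p,fibfam C p), phi, z) = (x, cp p phi, restrict (\<lambda>j. (fibfam C p j, fibm phi p j,
      restrict (\<lambda>l. z (senum (SF p j) l)) {..<crd (fib p j)})) {..<crd (cd p)})"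
    unfolding assoc_def by simp
  have E: "restrict (\<lambda>i. lam (restrict (\<lambda>j. (fibfam C p j, fibm phi p j,
      restrict (\<lambda>l. z (senum (SF p j) l)) {..<crd (fib p j)})) {..<crd (cd p)} i)) {..<crd (cd p)}
     = restrict (\<lambda>j. z (senum (SF p j) 0)) {..<crd (cd p)}"
  proof (rule restrict_ext)
    fix j assume "j \<in> {..<crd (cd p)}"
    then have "crd (fib p j) = 1" using c1 by auto
    then show "lam (restrict (\<lambda>j. (fibfam C p j, fibm phi p j,
      restrict (\<lambda>l. z (senum (SF p j) l)) {..<crd (fib p j)})) {..<crd (cd p)} j) = z (senum (SF p j) 0)"
      using \<open>j \<in> _\<close> unfolding lam_def by simp
  qed
  show ?thesis unfolding A rgt_def prod.case cc E ..
qed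

lemma fwt_fibfam_eq:
  assumes "u \<in> (\<Pi>\<^sub>E i \<in> {..<crd (cd p)}. {v \<in> Uset C. id v = fib p i})"
  shows "u = fibfam C p"
proof
  fix i show "u i = fibfam C p i"
  proof (cases "i < crd (cd p)")
    case True
    have "u i \<in> {v \<in> Uset C. id v = fib p i}" using PiE_mem[OF assms] True by blast
    then have "u i = fib p i" by simp
    then show ?thesis using True unfolding fibfam_def restrict_def by simp
  next
    case False
    then have "u i = undefined" using PiE_arb[OF assms] by simp
    then show ?thesis using False unfolding fibfam_def restrict_def by simp
  qed
qed

lemma fwt_of_fam:
  assumes "p \<in> M" "u \<in> (\<Pi>\<^sub>E i \<in> {..<crd (cd p)}. {v \<in> Uset C. id v = fib p i})"
  shows "fwt C p"
proof -
  { fix i assume i: "i < crd (cd p)"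
    then have "u i \<in> Uset C" "u i = fib p i" using assms(2) by auto
    then have "triv C (fib p i)" using Uset_iff by metis }
  then show ?thesis using assms(1) unfolding fwt_def by auto
qed

lemma expl_I:
  assumes "phi \<in> M" "fwt C p" "cd phi = dm p" "x \<in> X" "dX x = cd p"
    "y \<in> (\<Pi>\<^sub>E i \<in> {..<crd (cd p)}. {v \<in> Y. dY v = fib (cp p phi) i})"
  shows "((x, cp p phi, y), (rX (x, p, fibfam C p), phi, restrict (\<lambda>i'. y (crdm p i')) {..<crd (dm p)}))
    \<in> expl_pairs C X dX rX Y dY"
  unfolding expl_pairs_def mem_Collect_eq
  apply (rule exI[of _ x], rule exI[of _ p], rule exI[of _ phi], rule exI[of _ y])
  using assms by simp

lemma expl_E:
  assumes "(a,b) \<in> expl_pairs C X dX rX Y dY"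
  obtains x p phi y where "a = (x, cp p phi, y)"
    "b = (rX (x, p, fibfam C p), phi, restrict (\<lambda>i'. y (crdm p i')) {..<crd (dm p)})"
    "phi \<in> M" "fwt C p" "cd phi = dm p" "x \<in> X" "dX x = cd p"
    "y \<in> (\<Pi>\<^sub>E i \<in> {..<crd (cd p)}. {v \<in> Y. dY v = fib (cp p phi) i})"
  using assms unfolding expl_pairs_def mem_Collect_eq prod.inject
  by (elim exE conjE) (rule that; assumption)

lemma coeq_to_expl:
  assumes "(a,b) \<in> coeq_pairs C X dX rX Y dY"
  shows "(b,a) \<in> expl_pairs C X dX rX Y dY"
proof -
  obtain B where ab: "a = lft rX B" "b = rgt C lam (assoc C B)"
     and B: "B \<in> tens C (tens C X dX (Uset C) id) (tdom C) Y dY"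
    using assms unfolding coeq_pairs_def by blast
  obtain w phi y where bw: "B = (w,phi,y)" "phi \<in> M" "w \<in> tens C X dX (Uset C) id"
      "tdom C w = cd phi" "y \<in> (\<Pi>\<^sub>E i \<in> {..<crd (cd phi)}. {v \<in> Y. dY v = fib phi i})"
      by (rule tensE[OF B])
  obtain x p u where w: "w = (x,p,u)" "p \<in> M" "x \<in> X" "dX x = cd p"
      "u \<in> (\<Pi>\<^sub>E i \<in> {..<crd (cd p)}. {v \<in> Uset C. id v = fib p i})"
      by (rule tensE[OF bw(3)])
  have fp: "fwt C p" using fwt_of_fam[OF w(2) w(5)] .
  have u: "u = fibfam C p" using fwt_fibfam_eq[OF w(5)] .
  have c: "cd phi = dm p" using bw(4) unfolding w(1) tdom_def by simp
  define y' where "y' = restrict (\<lambda>j. y (senum (SF p j) 0)) {..<crd (cd p)}"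
  have b: "b = (x, cp p phi, y')" using ab(2) assoc_lam[OF fp bw(2) c] unfolding bw(1) w(1) u y'_def by simp
  have y'm: "y' \<in> (\<Pi>\<^sub>E i \<in> {..<crd (cd p)}. {v \<in> Y. dY v = fib (cp p phi) i})"
  proof -
    { fix j assume j: "j < crd (cd p)"
      have k: "senum (SF p j) 0 < crd (dm p)" "crdm p (senum (SF p j) 0) = j" using fwt_senum[OF fp j] by auto
      have "y (senum (SF p j) 0) \<in> {v \<in> Y. dY v = fib phi (senum (SF p j) 0)}"
        using PiE_mem[OF bw(5)] k c by simp
      then have "y (senum (SF p j) 0) \<in> Y" "dY (y (senum (SF p j) 0)) = fib phi (senum (SF p j) 0)"
        by auto
      moreover have "fib phi (senum (SF p j) 0) = fib (cp p phi) j" using fibk[OF fp bw(2) c k(1)] k(2) by simp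
      ultimately have "y' j \<in> Y" "dY (y' j) = fib (cp p phi) j" using j unfolding y'_def by auto }
    then show ?thesis unfolding y'_def by auto
  qed
  have yy: "y = restrict (\<lambda>i'. y' (crdm p i')) {..<crd (dm p)}"
  proof
    fix i'
    show "y i' = restrict (\<lambda>i'. y' (crdm p i')) {..<crd (dm p)} i'"
    proof (cases "i' < crd (dm p)")
      case True
      then show ?thesis using crdm_lt[OF w(2) True] fwt_senum_crdm[OF fp True] unfolding y'_def by simp
    next
      case False
      then have "y i' = undefined" using PiE_arb[OF bw(5)] c by simp
      then show ?thesis using False by simp
    qed
  qed
  have a: "a = (rX (x, p, fibfam C p), phi, restrict (\<lambda>i'. y' (crdm p i')) {..<crd (dm p)})"
    using ab(1) yy unfolding bw(1) w(1) u lft_def by simp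
  show ?thesis unfolding a b using expl_I[where dX=dX and rX=rX and Y=Y and dY=dY, OF bw(2) fp c w(3) w(4) y'm] .
qed

lemma expl_to_coeq:
  assumes "(a,b) \<in> expl_pairs C X dX rX Y dY"
  shows "(b,a) \<in> coeq_pairs C X dX rX Y dY"
proof -
  obtain x p phi y where e: "a = (x, cp p phi, y)"
    "b = (rX (x, p, fibfam C p), phi, restrict (\<lambda>i'. y (crdm p i')) {..<crd (dm p)})"
    "phi \<in> M" "fwt C p" "cd phi = dm p" "x \<in> X" "dX x = cd p"
    "y \<in> (\<Pi>\<^sub>E i \<in> {..<crd (cd p)}. {v \<in> Y. dY v = fib (cp p phi) i})"
    by (rule expl_E[OF assms])
  have pm: "p \<in> M" using fwt_mor[OF e(4)] .
  define z where "z = restrict (\<lambda>i'. y (crdm p i')) {..<crd (dm p)}"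
  define B where "B = ((x, p, fibfam C p), phi, z)"
  have w: "(x, p, fibfam C p) \<in> tens C X dX (Uset C) id" unfolding mem_tens using e(6) e(7) pm fibfam_mem[OF e(4)] by blast
  have zm: "z \<in> (\<Pi>\<^sub>E i \<in> {..<crd (cd phi)}. {v \<in> Y. dY v = fib phi i})"
  proof -
    { fix i' assume i': "i' < crd (dm p)"
      have "crdm p i' < crd (cd p)" using crdm_lt[OF pm i'] .
      then have "y (crdm p i') \<in> {v \<in> Y. dY v = fib (cp p phi) (crdm p i')}" using PiE_mem[OF e(8)] by blast
      then have "y (crdm p i') \<in> Y" "dY (y (crdm p i')) = fib (cp p phi) (crdm p i')" by auto
      moreover have "fib phi i' = fib (cp p phi) (crdm p i')" using fibk[OF e(4) e(3) e(5) i'] .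
      ultimately have "y (crdm p i') \<in> {v \<in> Y. dY v = fib phi i'}" by simp }
    then show ?thesis unfolding z_def e(5) restrict_PiE_iff by blast
  qed
  have Bm: "B \<in> tens C (tens C X dX (Uset C) id) (tdom C) Y dY"
    unfolding B_def using w zm e(3) e(5) by (subst mem_tens) (simp add: tdom_def)
  have l: "lft rX B = b" unfolding B_def lft_def z_def e(2) by simp
  have yy: "restrict (\<lambda>j. z (senum (SF p j) 0)) {..<crd (cd p)} = y"
  proof
    fix j
    show "restrict (\<lambda>j. z (senum (SF p j) 0)) {..<crd (cd p)} j = y j"
    proof (cases "j < crd (cd p)")
      case True
      then show ?thesis using fwt_senum[OF e(4) True] unfolding z_def by simp
    next
      case False
      then have "y j = undefined" using PiE_arb[OF e(8)] by simp
      then show ?thesis using False by simp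
    qed
  qed
  have r: "rgt C lam (assoc C B) = a" unfolding B_def assoc_lam[OF e(4) e(3) e(5)] yy e(1) ..
  show ?thesis unfolding coeq_pairs_def using Bm l r by blast
qed

lemma coeq_conv: "coeq_pairs C X dX rX Y dY = (expl_pairs C X dX rX Y dY)\<inverse>"
  by (auto dest: coeq_to_expl expl_to_coeq)

lemma genEq_conv: "genEq A (R\<inverse>) = genEq A R"
  unfolding genEq_def by (simp add: Un_commute)

lemma part2: "wedge_rel C X dX rX Y dY = genEq (tens C X dX Y dY) (expl_pairs C X dX rX Y dY)"
  unfolding wedge_rel_def coeq_conv genEq_conv ..

end

context opc begin

definition actw :: "(('y \<times> 'm \<times> (nat \<Rightarrow> 'o)) \<Rightarrow> 'y) \<Rightarrow> ('x \<times> 'm \<times> (nat \<Rightarrow> 'y)) \<Rightarrow> 'm \<Rightarrow> ('x \<times> 'm \<times> (nat \<Rightarrow> 'y))" where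
  "actw rY w s = (case w of (x, phi, y) \<Rightarrow>
     (x, cp phi s, restrict (\<lambda>i. rY (y i, fibm s phi i, fibfam C (fibm s phi i))) {..<crd (cd phi)}))"

lemma FF:
  assumes s: "fwt C s" and phi: "phi \<in> M" and c: "cd s = dm phi" and j: "j < crd (cd phi)"
  shows "restrict (\<lambda>l. fibfam C s (senum (SF phi j) l)) {..<crd (fib phi j)} = fibfam C (fibm s phi j)"
proof -
  have sm: "s \<in> M" using fwt_mor[OF s] .
  have fm: "cd (fibm s phi j) = fib phi j" using fibm_mor[OF sm phi c j] by auto
  show ?thesis unfolding fibfam_def fm
  proof (rule restrict_ext)
    fix l assume l: "l \<in> {..<crd (fib phi j)}"
    define A where "A = SF phi j"
    have "l < card A" using l crd_fib[OF phi j] A_def by simp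
    then have kA: "senum A l \<in> A" and sp: "spos (senum A l) A = l"
      using senum_spos[OF sfib_finite] A_def by auto
    define k where "k = senum A l"
    have k1: "k < crd (dm phi)" and k2: "crdm phi k = j" using kA unfolding k_def A_def sfib_def by auto
    have "fib s k = fib (fibm s phi j) l" using dslice[OF sm phi c k1] k2 sp k_def A_def by simp
    moreover have "k < crd (cd s)" using k1 c by simp
    ultimately show "restrict (fib s) {..<crd (cd s)} (senum (SF phi j) l) = fib (fibm s phi j) l"
      using k_def A_def by simp
  qed
qed

lemma assoc_act:
  assumes phi: "phi \<in> M" and s: "fwt C s" and c: "cd s = dm phi"
  shows "rgt C rY (assoc C ((x, phi, y), s, fibfam C s)) = actw rY (x, phi, y) s"
proof -
  have sm: "s \<in> M" using fwt_mor[OF s] .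
  have cc: "cd (cp phi s) = cd phi" using comp_cod[OF sm phi c] .
  have A: "assoc C ((x, phi, y), s, fibfam C s) = (x, cp phi s, restrict (\<lambda>j. (y j, fibm s phi j,
      restrict (\<lambda>l. fibfam C s (senum (SF phi j) l)) {..<crd (fib phi j)})) {..<crd (cd phi)})"
    unfolding assoc_def by simp
  have E: "restrict (\<lambda>i. rY (restrict (\<lambda>j. (y j, fibm s phi j,
      restrict (\<lambda>l. fibfam C s (senum (SF phi j) l)) {..<crd (fib phi j)})) {..<crd (cd phi)} i)) {..<crd (cd phi)}
     = restrict (\<lambda>i. rY (y i, fibm s phi i, fibfam C (fibm s phi i))) {..<crd (cd phi)}"
  proof (rule restrict_ext)
    fix j assume j: "j \<in> {..<crd (cd phi)}"
    then show "rY (restrict (\<lambda>j. (y j, fibm s phi j,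
      restrict (\<lambda>l. fibfam C s (senum (SF phi j) l)) {..<crd (fib phi j)})) {..<crd (cd phi)} j)
      = rY (y j, fibm s phi j, fibfam C (fibm s phi j))"
      using FF[OF s phi c] by simp
  qed
  show ?thesis unfolding A rgt_def prod.case cc E actw_def ..
qed

lemma rmod_act:
  assumes "rmod C Y dY rY" "a \<in> tens C Y dY (Uset C) id"
  shows "rY a \<in> Y \<and> dY (rY a) = tdom C a"
  using assms unfolding rmod_def by blast

lemma act_tens:
  assumes rm: "rmod C Y dY rY" and w: "w \<in> tens C X dX Y dY" and s: "fwt C s" and c: "cd s = tdom C w"
  shows "actw rY w s \<in> tens C X dX Y dY \<and> tdom C (actw rY w s) = dm s"
proof -
  obtain x phi y where w1: "w = (x,phi,y)" "phi \<in> M" "x \<in> X" "dX x = cd phi"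
      "y \<in> (\<Pi>\<^sub>E i \<in> {..<crd (cd phi)}. {v \<in> Y. dY v = fib phi i})"
    by (rule tensE[OF w])
  have sm: "s \<in> M" using fwt_mor[OF s] .
  have c': "cd s = dm phi" using c unfolding w1(1) tdom_def by simp
  have cm: "cp phi s \<in> M" "cd (cp phi s) = cd phi" "dm (cp phi s) = dm s"
    using comp_mor[OF sm w1(2) c'] comp_cod[OF sm w1(2) c'] comp_dom[OF sm w1(2) c'] by auto
  have Ym: "restrict (\<lambda>i. rY (y i, fibm s phi i, fibfam C (fibm s phi i))) {..<crd (cd phi)}
     \<in> (\<Pi>\<^sub>E i \<in> {..<crd (cd (cp phi s))}. {v \<in> Y. dY v = fib (cp phi s) i})"
    unfolding cm(2) restrict_PiE_iff
  proof
    fix i assume i: "i \<in> {..<crd (cd phi)}"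
    then have il: "i < crd (cd phi)" by simp
    have fm: "fibm s phi i \<in> M" "dm (fibm s phi i) = fib (cp phi s) i" "cd (fibm s phi i) = fib phi i"
      using fibm_mor[OF sm w1(2) c' il] by auto
    have yi: "y i \<in> {v \<in> Y. dY v = fib phi i}" using PiE_mem[OF w1(5) i] .
    have a: "(y i, fibm s phi i, fibfam C (fibm s phi i)) \<in> tens C Y dY (Uset C) id"
      unfolding mem_tens using fm yi fibfam_mem[OF fwt_fibm[OF s w1(2) c' il]] by auto
    have "rY (y i, fibm s phi i, fibfam C (fibm s phi i)) \<in> Y \<and>
          dY (rY (y i, fibm s phi i, fibfam C (fibm s phi i))) = fib (cp phi s) i"
      using rmod_act[OF rm a] fm unfolding tdom_def by simp
    then show "rY (y i, fibm s phi i, fibfam C (fibm s phi i)) \<in> {v \<in> Y. dY v = fib (cp phi s) i}" by simp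
  qed
  have AW: "actw rY w s = (x, cp phi s, restrict (\<lambda>i. rY (y i, fibm s phi i, fibfam C (fibm s phi i))) {..<crd (cd phi)})"
    unfolding w1(1) actw_def by simp
  have T: "(x, cp phi s, restrict (\<lambda>i. rY (y i, fibm s phi i, fibfam C (fibm s phi i))) {..<crd (cd phi)}) \<in> tens C X dX Y dY"
    unfolding mem_tens
    apply (intro conjI)
       apply (rule cm(1))
      apply (rule w1(3))
    using w1(4) cm(2) apply simp
    by (rule Ym)
  show ?thesis unfolding AW using T cm(3) unfolding tdom_def by simp
qed

lemma fibmk:
  assumes p: "fwt C p" and phi: "phi \<in> M" and c: "cd phi = dm p" and k: "k < crd (dm p)"
    and s: "s \<in> M" and c2: "cd s = dm phi"
  shows "fibm s phi k = fibm s (cp p phi) (crdm p k)"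
proof -
  have pm: "p \<in> M" using fwt_mor[OF p] .
  have j: "crdm p k < crd (cd p)" using crdm_lt[OF pm k] .
  have t: "triv C (fib p (crdm p k))" using p j unfolding fwt_def by auto
  have cpm: "cp p phi \<in> M" "dm (cp p phi) = dm phi" "cd (cp p phi) = cd p"
    using comp_mor[OF phi pm c] comp_dom[OF phi pm c] comp_cod[OF phi pm c] by auto
  have j2: "crdm p k < crd (cd (cp p phi))" using j cpm by simp
  have f1: "fibm phi p (crdm p k) \<in> M" "dm (fibm phi p (crdm p k)) = fib (cp p phi) (crdm p k)"
     "cd (fibm phi p (crdm p k)) = fib p (crdm p k)" using fibm_mor[OF phi pm c j] by auto
  have f2: "fibm s (cp p phi) (crdm p k) \<in> M" "cd (fibm s (cp p phi) (crdm p k)) = fib (cp p phi) (crdm p k)"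
    using fibm_mor[OF s cpm(1) _ j2] c2 cpm by auto
  have "fibm s phi k = fibm (fibm s (cp p phi) (crdm p k)) (fibm phi p (crdm p k)) 0"
    using dslice2[OF phi pm c k s c2] fwt_spos[OF p k] by simp
  also have "\<dots> = fibm s (cp p phi) (crdm p k)"
    using triv_fibm[OF t f2(1) f1(1)] f1 f2 by simp
  finally show ?thesis .
qed

lemma tdom_expl:
  assumes "(a,b) \<in> expl_pairs C X dX rX Y dY"
  shows "tdom C b = tdom C a"
proof -
  obtain x p phi y where e: "a = (x, cp p phi, y)"
    "b = (rX (x, p, fibfam C p), phi, restrict (\<lambda>i'. y (crdm p i')) {..<crd (dm p)})"
    "phi \<in> M" "fwt C p" "cd phi = dm p" "x \<in> X" "dX x = cd p"
    "y \<in> (\<Pi>\<^sub>E i \<in> {..<crd (cd p)}. {v \<in> Y. dY v = fib (cp p phi) i})"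
    by (rule expl_E[OF assms])
  show ?thesis unfolding e(1) e(2) tdom_def using comp_dom[OF e(3) fwt_mor[OF e(4)] e(5)] by simp
qed

lemma act_expl:
  assumes rm: "rmod C Y dY rY" and ab: "(a,b) \<in> expl_pairs C X dX rX Y dY"
    and s: "fwt C s" and c: "cd s = tdom C a"
  shows "(actw rY a s, actw rY b s) \<in> expl_pairs C X dX rX Y dY"
proof -
  obtain x p phi y where e: "a = (x, cp p phi, y)"
    "b = (rX (x, p, fibfam C p), phi, restrict (\<lambda>i'. y (crdm p i')) {..<crd (dm p)})"
    "phi \<in> M" "fwt C p" "cd phi = dm p" "x \<in> X" "dX x = cd p"
    "y \<in> (\<Pi>\<^sub>E i \<in> {..<crd (cd p)}. {v \<in> Y. dY v = fib (cp p phi) i})"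
    by (rule expl_E[OF ab])
  have pm: "p \<in> M" using fwt_mor[OF e(4)] .
  have sm: "s \<in> M" using fwt_mor[OF s] .
  have cpm: "cp p phi \<in> M" "dm (cp p phi) = dm phi" "cd (cp p phi) = cd p"
    using comp_mor[OF e(3) pm e(5)] comp_dom[OF e(3) pm e(5)] comp_cod[OF e(3) pm e(5)] by auto
  have c2: "cd s = dm phi" using c cpm unfolding e(1) tdom_def by simp
  have sphi: "cp phi s \<in> M" "cd (cp phi s) = cd phi"
    using comp_mor[OF sm e(3) c2] comp_cod[OF sm e(3) c2] by auto
  have asc: "cp (cp p phi) s = cp p (cp phi s)" using sym[OF comp_assoc[OF sm e(3) pm c2 e(5)]] .
  have aT: "a \<in> tens C X dX Y dY" unfolding e(1) mem_tens using cpm e(6) e(7) e(8) by simp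
  define Y1 where "Y1 = restrict (\<lambda>i. rY (y i, fibm s (cp p phi) i, fibfam C (fibm s (cp p phi) i))) {..<crd (cd (cp p phi))}"
  have a1: "actw rY a s = (x, cp p (cp phi s), Y1)" unfolding e(1) actw_def Y1_def using asc by simp
  have Y1m: "Y1 \<in> (\<Pi>\<^sub>E i \<in> {..<crd (cd p)}. {v \<in> Y. dY v = fib (cp p (cp phi s)) i})"
  proof -
    have "actw rY a s \<in> tens C X dX Y dY" using act_tens[OF rm aT s c] by simp
    then show ?thesis unfolding a1 mem_tens using sphi e(5) comp_cod[OF sphi(1) pm] by simp
  qed
  have b1: "actw rY b s = (rX (x, p, fibfam C p), cp phi s, restrict (\<lambda>i'. Y1 (crdm p i')) {..<crd (dm p)})"
  proof -
    have "restrict (\<lambda>i. rY (restrict (\<lambda>i'. y (crdm p i')) {..<crd (dm p)} i, fibm s phi i, fibfam C (fibm s phi i))) {..<crd (cd phi)}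
        = restrict (\<lambda>i'. Y1 (crdm p i')) {..<crd (dm p)}"
      unfolding e(5)
    proof (rule restrict_ext)
      fix i assume i: "i \<in> {..<crd (dm p)}"
      then have il: "i < crd (dm p)" by simp
      have "crdm p i < crd (cd (cp p phi))" using crdm_lt[OF pm il] cpm by simp
      then show "rY (restrict (\<lambda>i'. y (crdm p i')) {..<crd (dm p)} i, fibm s phi i, fibfam C (fibm s phi i)) = Y1 (crdm p i)"
        unfolding Y1_def using i fibmk[OF e(4) e(3) e(5) il sm c2] by simp
    qed
    then show ?thesis unfolding e(2) actw_def by simp
  qed
  show ?thesis unfolding a1 b1
    using expl_I[where dX=dX and rX=rX and Y=Y and dY=dY, OF sphi(1) e(4) _ e(6) e(7) Y1m] sphi(2) e(5) by simp
qed

end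

lemma genEq_sym: "(a,b) \<in> genEq A R \<Longrightarrow> (b,a) \<in> genEq A R"
proof -
  assume ab: "(a,b) \<in> genEq A R"
  have s: "sym ((R \<union> R\<inverse>)\<^sup>+)" by (rule sym_trancl) (simp add: sym_Un_converse)
  show ?thesis using ab s unfolding genEq_def by (auto dest: symD)
qed

lemma genEq_trans: "(a,b) \<in> genEq A R \<Longrightarrow> (b,c) \<in> genEq A R \<Longrightarrow> (a,c) \<in> genEq A R"
  unfolding genEq_def by (auto intro: trancl_trans)

lemma genEq_refl: "a \<in> A \<Longrightarrow> (a,a) \<in> genEq A R"
  unfolding genEq_def by auto

lemma genEq_cls: "(a,b) \<in> genEq A R \<Longrightarrow> genEq A R `` {a} = genEq A R `` {b}"
  using genEq_sym genEq_trans by fast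

context opc begin

lemma act_S:
  assumes rm: "rmod C Y dY rY" and ab: "(a,b) \<in> expl_pairs C X dX rX Y dY \<union> (expl_pairs C X dX rX Y dY)\<inverse>"
    and s: "fwt C s" and c: "cd s = tdom C a"
  shows "(actw rY a s, actw rY b s) \<in> expl_pairs C X dX rX Y dY \<union> (expl_pairs C X dX rX Y dY)\<inverse> \<and> tdom C b = tdom C a"
proof (cases "(a,b) \<in> expl_pairs C X dX rX Y dY")
  case True
  then show ?thesis using act_expl[OF rm True s c] tdom_expl[OF True] by simp
next
  case False
  then have ba: "(b,a) \<in> expl_pairs C X dX rX Y dY" using ab by simp
  have t: "tdom C a = tdom C b" using tdom_expl[OF ba] .
  show ?thesis using act_expl[OF rm ba s] c t by simp
qed

lemma act_trancl:
  assumes rm: "rmod C Y dY rY" and ab: "(a,b) \<in> (expl_pairs C X dX rX Y dY \<union> (expl_pairs C X dX rX Y dY)\<inverse>)\<^sup>+"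
    and s: "fwt C s" and c: "cd s = tdom C a"
  shows "(actw rY a s, actw rY b s) \<in> (expl_pairs C X dX rX Y dY \<union> (expl_pairs C X dX rX Y dY)\<inverse>)\<^sup>+ \<and> tdom C b = tdom C a"
  using ab
proof (induction rule: trancl_induct)
  case (base y)
  then show ?case using act_S[OF rm base s c] by auto
next
  case (step y z)
  have c': "cd s = tdom C y" using step.IH c by simp
  have "(actw rY y s, actw rY z s) \<in> expl_pairs C X dX rX Y dY \<union> (expl_pairs C X dX rX Y dY)\<inverse> \<and> tdom C z = tdom C y"
    using act_S[OF rm step.hyps(2) s c'] .
  then show ?case using step.IH by (auto intro: trancl_into_trancl)
qed

lemma act_genEq:
  assumes rm: "rmod C Y dY rY" and ab: "(a,b) \<in> genEq (tens C X dX Y dY) (expl_pairs C X dX rX Y dY)"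
    and s: "fwt C s" and c: "cd s = tdom C a"
  shows "(actw rY a s, actw rY b s) \<in> genEq (tens C X dX Y dY) (expl_pairs C X dX rX Y dY)"
proof -
  have "(a,b) \<in> Id_on (tens C X dX Y dY) \<or> (a,b) \<in> (expl_pairs C X dX rX Y dY \<union> (expl_pairs C X dX rX Y dY)\<inverse>)\<^sup>+"
    using ab unfolding genEq_def by simp
  then show ?thesis
  proof
    assume "(a,b) \<in> Id_on (tens C X dX Y dY)"
    then have "a = b" "a \<in> tens C X dX Y dY" by auto
    then show ?thesis using act_tens[OF rm _ s c] genEq_refl by metis
  next
    assume "(a,b) \<in> (expl_pairs C X dX rX Y dY \<union> (expl_pairs C X dX rX Y dY)\<inverse>)\<^sup>+"
    then show ?thesis using act_trancl[OF rm _ s c] unfolding genEq_def by blast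
  qed
qed

lemma part3a:
  assumes rm: "rmod C Y dY rY"
  shows "\<exists>r'. \<forall>b \<in> tens C (tens C X dX Y dY) (tdom C) (Uset C) id.
     r' (lft (wcls C X dX rX Y dY) b) = wcls C X dX rX Y dY (rgt C rY (assoc C b))"
proof -
  let ?T = "tens C X dX Y dY"
  let ?G = "genEq ?T (expl_pairs C X dX rX Y dY)"
  let ?p = "wcls C X dX rX Y dY"
  have p: "\<And>a. ?p a = ?G `` {a}" unfolding wcls_def part2 ..
  define r' where "r' = (\<lambda>(c, s, z::nat \<Rightarrow> 'o). ?p (actw rY (SOME w. w \<in> ?T \<and> ?p w = c \<and> tdom C w = cd s) s))"
  have "r' (lft ?p b) = ?p (rgt C rY (assoc C b))" if b: "b \<in> tens C ?T (tdom C) (Uset C) id" for b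
  proof -
    obtain w s z where bw: "b = (w,s,z)" "s \<in> M" "w \<in> ?T" "tdom C w = cd s"
      "z \<in> (\<Pi>\<^sub>E i \<in> {..<crd (cd s)}. {v \<in> Uset C. id v = fib s i})"
      by (rule tensE[OF b])
    have fs: "fwt C s" using fwt_of_fam[OF bw(2) bw(5)] .
    have z: "z = fibfam C s" using fwt_fibfam_eq[OF bw(5)] .
    obtain x phi y where w1: "w = (x,phi,y)" "phi \<in> M" "x \<in> X" "dX x = cd phi"
      "y \<in> (\<Pi>\<^sub>E i \<in> {..<crd (cd phi)}. {v \<in> Y. dY v = fib phi i})"
      by (rule tensE[OF bw(3)])
    have cs: "cd s = dm phi" using bw(4) unfolding w1(1) tdom_def by simp
    have R: "rgt C rY (assoc C b) = actw rY w s" unfolding bw(1) z w1(1) using assoc_act[OF w1(2) fs cs] .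
    define w' where "w' = (SOME w'. w' \<in> ?T \<and> ?p w' = ?p w \<and> tdom C w' = cd s)"
    have ex: "\<exists>w'. w' \<in> ?T \<and> ?p w' = ?p w \<and> tdom C w' = cd s" using bw(3) bw(4) by blast
    have w': "w' \<in> ?T" "?p w' = ?p w" "tdom C w' = cd s" using someI_ex[OF ex] unfolding w'_def by auto
    have "w' \<in> ?G `` {w'}" using genEq_refl[OF w'(1)] by simp
    then have "w' \<in> ?G `` {w}" using w'(2) unfolding p by simp
    then have "(w, w') \<in> ?G" by simp
    then have "(actw rY w s, actw rY w' s) \<in> ?G" using act_genEq[OF rm _ fs] bw(4) by metis
    then have "?p (actw rY w' s) = ?p (actw rY w s)" using genEq_cls p by metis
    moreover have "r' (lft ?p b) = ?p (actw rY w' s)" unfolding r'_def bw(1) lft_def w'_def by simp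
    ultimately show ?thesis using R by simp
  qed
  then show ?thesis by blast
qed

lemma part3b:
  assumes det: "\<forall>b \<in> tens C (tens C X dX Y dY) (tdom C) (Uset C) id.
     r' (lft (wcls C X dX rX Y dY) b) = wcls C X dX rX Y dY (rgt C rY (assoc C b))"
    and h: "phi \<in> M \<and> x \<in> X \<and> dX x = cd phi \<and>
                y \<in> (\<Pi>\<^sub>E i \<in> {..<crd (cd phi)}. {v \<in> Y. dY v = fib phi i}) \<and>
                fwt C s \<and> cd s = dm phi"
  shows "r' (wcls C X dX rX Y dY (x, phi, y), s, fibfam C s)
                 = wcls C X dX rX Y dY (x, cp phi s,
                      restrict (\<lambda>i. rY (y i, fibm s phi i, fibfam C (fibm s phi i)))
                               {..<crd (cd phi)})"
proof -
  have h1: "phi \<in> M" using h by (elim conjE)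
  have h2: "x \<in> X" using h by (elim conjE)
  have h3: "dX x = cd phi" using h by (elim conjE)
  have h4: "y \<in> (\<Pi>\<^sub>E i \<in> {..<crd (cd phi)}. {v \<in> Y. dY v = fib phi i})" using h by (elim conjE)
  have fs: "fwt C s" using h by (elim conjE)
  have h6: "cd s = dm phi" using h by (elim conjE)
  have w: "(x,phi,y) \<in> tens C X dX Y dY" unfolding mem_tens by (intro conjI h1 h2 h3 h4)
  have sm: "s \<in> M" using fwt_mor[OF fs] .
  have cs: "tdom C (x,phi,y) = cd s" using h6 unfolding tdom_def by simp
  have b: "((x,phi,y), s, fibfam C s) \<in> tens C (tens C X dX Y dY) (tdom C) (Uset C) id"
    unfolding mem_tens[of "(x,phi,y)"] by (intro conjI sm w cs fibfam_mem[OF fs])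
  have "r' (lft (wcls C X dX rX Y dY) ((x,phi,y), s, fibfam C s))
     = wcls C X dX rX Y dY (rgt C rY (assoc C ((x,phi,y), s, fibfam C s)))" using det b by blast
  moreover have "rgt C rY (assoc C ((x,phi,y), s, fibfam C s)) = actw rY (x,phi,y) s"
    using assoc_act[OF h1 fs h6] .
  ultimately show ?thesis unfolding lft_def actw_def by simp
qed

end

theorem proposition9p2:
  fixes C :: "('o, 'm) opcat"
    and X :: "'x set" and dX :: "'x \<Rightarrow> 'o" and rX :: "('x \<times> 'm \<times> (nat \<Rightarrow> 'o)) \<Rightarrow> 'x"
    and Y :: "'y set" and dY :: "'y \<Rightarrow> 'o" and rY :: "('y \<times> 'm \<times> (nat \<Rightarrow> 'o)) \<Rightarrow> 'y"
  assumes "operadic C" and "rmod C X dX rX" and "rmod C Y dY rY"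
  shows
    "(rmod C (Uset C) id lam \<and>
      (\<forall>r r'. rmod C (Uset C) id r \<and> rmod C (Uset C) id r' \<longrightarrow>
         (\<forall>a \<in> tens C (Uset C) id (Uset C) id. r a = r' a))) \<and>
     wedge_rel C X dX rX Y dY = genEq (tens C X dX Y dY) (expl_pairs C X dX rX Y dY) \<and>
     (let p = wcls C X dX rX Y dY;
          determ = (\<lambda>r'. \<forall>b \<in> tens C (tens C X dX Y dY) (tdom C) (Uset C) id.
                           r' (lft p b) = p (rgt C rY (assoc C b)))
      in (\<exists>r'. determ r') \<and>
         (\<forall>r'. determ r' \<longrightarrow>
            (\<forall>x phi y s. phi \<in> cMor C \<and> x \<in> X \<and> dX x = cCod C phi \<and>
                y \<in> (\<Pi>\<^sub>E i \<in> {..<cCard C (cCod C phi)}. {v \<in> Y. dY v = cFib C phi i}) \<and>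
                fwt C s \<and> cCod C s = cDom C phi \<longrightarrow>
               r' (p (x, phi, y), s, fibfam C s)
                 = p (x, cComp C phi s,
                      restrict (\<lambda>i. rY (y i, cFibm C s phi i, fibfam C (cFibm C s phi i)))
                               {..<cCard C (cCod C phi)}))))"
proof -
  interpret opc C using assms(1) by unfold_locales
  have P1: "rmod C (Uset C) id lam \<and>
      (\<forall>r r'. rmod C (Uset C) id r \<and> rmod C (Uset C) id r' \<longrightarrow>
         (\<forall>a \<in> tens C (Uset C) id (Uset C) id. r a = r' a))"
  proof (intro conjI allI impI ballI)
    show "rmod C (Uset C) id lam" by (rule U_rmod)
    fix r r' a assume rr: "rmod C (Uset C) id r \<and> rmod C (Uset C) id r'" and a: "a \<in> tens C (Uset C) id (Uset C) id"
    show "r a = r' a" using U_unique[OF conjunct1[OF rr] a] U_unique[OF conjunct2[OF rr] a] by simp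
  qed
  have P2: "wedge_rel C X dX rX Y dY = genEq (tens C X dX Y dY) (expl_pairs C X dX rX Y dY)"
    by (rule part2)
  have P3a: "\<exists>r'. \<forall>b \<in> tens C (tens C X dX Y dY) (tdom C) (Uset C) id.
     r' (lft (wcls C X dX rX Y dY) b) = wcls C X dX rX Y dY (rgt C rY (assoc C b))"
    by (rule part3a[OF assms(3)])
  have P3b: "\<forall>r'. (\<forall>b \<in> tens C (tens C X dX Y dY) (tdom C) (Uset C) id.
                           r' (lft (wcls C X dX rX Y dY) b) = wcls C X dX rX Y dY (rgt C rY (assoc C b))) \<longrightarrow>
            (\<forall>x phi y s. phi \<in> cMor C \<and> x \<in> X \<and> dX x = cCod C phi \<and>
                y \<in> (\<Pi>\<^sub>E i \<in> {..<cCard C (cCod C phi)}. {v \<in> Y. dY v = cFib C phi i}) \<and>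
                fwt C s \<and> cCod C s = cDom C phi \<longrightarrow>
               r' (wcls C X dX rX Y dY (x, phi, y), s, fibfam C s)
                 = wcls C X dX rX Y dY (x, cComp C phi s,
                      restrict (\<lambda>i. rY (y i, cFibm C s phi i, fibfam C (cFibm C s phi i)))
                               {..<cCard C (cCod C phi)}))"
  proof (intro allI impI)
    fix r' x phi y s
    assume d: "\<forall>b \<in> tens C (tens C X dX Y dY) (tdom C) (Uset C) id.
                           r' (lft (wcls C X dX rX Y dY) b) = wcls C X dX rX Y dY (rgt C rY (assoc C b))"
      and h: "phi \<in> cMor C \<and> x \<in> X \<and> dX x = cCod C phi \<and>
                y \<in> (\<Pi>\<^sub>E i \<in> {..<cCard C (cCod C phi)}. {v \<in> Y. dY v = cFib C phi i}) \<and>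
                fwt C s \<and> cCod C s = cDom C phi"
    show "r' (wcls C X dX rX Y dY (x, phi, y), s, fibfam C s)
                 = wcls C X dX rX Y dY (x, cComp C phi s,
                      restrict (\<lambda>i. rY (y i, cFibm C s phi i, fibfam C (cFibm C s phi i)))
                               {..<cCard C (cCod C phi)})"
      by (rule part3b[OF d h])
  qed
  show ?thesis unfolding Let_def by (rule conjI[OF P1 conjI[OF P2 conjI[OF P3a P3b]]])
qed

end
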